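(* For a non-negative integer $m$, let $k^*_m$ denote the minimum $k \ge 0$ such that there exist non-negative integers $x_1,\dots,x_k,y_1,\dots,y_k$ with $\sum_{i=1}^k 2^{x_i}3^{y_i} = m$ (so $k^*_0 = 0$). For a positive integer $n$ let $$\mathcal{A}^*(n) := \frac{1}{2^n}\sum_{m=0}^{2^n-1} k^*_m .$$ Then $\mathcal{A}^*(n) \in \Omega(n/\lg n)$ as $n \to \infty$.
   Context: A representation of a non-negative integer $m$ in the double-base number system is a tuple $[k, \langle x_i\rangle_{i=1}^k, \langle y_i\rangle_{i=1}^k]$ of non-negative integers with $\sum_{i=1}^k 2^{x_i}3^{y_i}=m$; $k$ is its number of terms, and $k^*_m$ is the number of terms of a representation of $m$ with the fewest terms. $\lg$ denotes the base-2 logarithm. *)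

theory Defs
  imports Complex_Main "HOL-Library.Landau_Symbols"
begin

definition dbns_rep :: "(nat \<times> nat) list \<Rightarrow> nat \<Rightarrow> bool" where
  "dbns_rep xs m \<longleftrightarrow> (\<Sum>p\<leftarrow>xs. 2 ^ fst p * 3 ^ snd p) = m"

definition kstar :: "nat \<Rightarrow> nat" where
  "kstar m = (LEAST k. \<exists>xs. length xs = k \<and> dbns_rep xs m)"

definition Astar :: "nat \<Rightarrow> real" where
  "Astar n = (\<Sum>m<2 ^ n. real (kstar m)) / 2 ^ n"

end

theory Submission
  imports Defs
begin

lemma kstar_le: "dbns_rep xs m \<Longrightarrow> kstar m \<le> length xs"
  unfolding kstar_def by (rule Least_le) blast

lemma kstar_ex: "\<exists>xs. length xs = kstar m \<and> dbns_rep xs m"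
proof -
  have "dbns_rep (replicate m (0,0)) m"
    by (simp add: dbns_rep_def sum_list_replicate)
  then have "\<exists>k xs. length xs = k \<and> dbns_rep xs m" by blast
  then show ?thesis unfolding kstar_def by (rule LeastI_ex)
qed

lemma geo_le: "(\<Sum>i\<le>k. (N::nat)^i) \<le> (N+1)^k"
proof (induction k)
  case 0 then show ?case by simp
next
  case (Suc k)
  have p: "N^k \<le> (N+1)^k" by (rule power_mono) auto
  have q: "N*N^k \<le> N*(N+1)^k" using p by (rule mult_le_mono2)
  have "(\<Sum>i\<le>Suc k. N^i) = (\<Sum>i\<le>k. N^i) + N*N^k" by simp
  also have "\<dots> \<le> (N+1)^k + N*(N+1)^k" by (rule add_mono[OF Suc.IH q])
  also have "\<dots> = (N+1)^Suc k" by simp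
  finally show ?case .
qed

lemma card_S: "card {m. m < 2^n \<and> kstar m \<le> k} \<le> (n*n+1)^k"
proof -
  let ?f = "\<lambda>xs. (\<Sum>p\<leftarrow>xs. (2::nat) ^ fst p * 3 ^ snd p)"
  let ?L = "{xs. set xs \<subseteq> {..<n}\<times>{..<n} \<and> length xs \<le> k}"
  have sub: "{m. m < 2^n \<and> kstar m \<le> k} \<subseteq> ?f ` ?L"
  proof
    fix m assume "m \<in> {m. m < 2^n \<and> kstar m \<le> k}"
    then have m: "m < 2^n" "kstar m \<le> k" by auto
    obtain xs where xs: "length xs = kstar m" "dbns_rep xs m" using kstar_ex by blast
    have "set xs \<subseteq> {..<n}\<times>{..<n}"
    proof
      fix p assume p: "p \<in> set xs"
      obtain a b where ab: "p = (a,b)" by force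
      have "2^a * 3^b \<le> m"
        using xs(2) p ab unfolding dbns_rep_def
        by (metis (no_types, lifting) fst_conv image_eqI member_le_sum_list set_map snd_conv zero_le)
      then have "2^a * 3^b < (2::nat)^n" using m by linarith
      then have a: "2^a < (2::nat)^n" and b3: "3^b < (2::nat)^n"
        by (metis dual_order.strict_trans2 le_add1 mult.commute mult_le_mono2 nat_mult_1 one_le_power zero_less_numeral pos2 mult_le_cancel2 less_one linorder_not_less)+
      have "(2::nat)^n \<le> 3^n" by (simp add: power_mono)
      with b3 have "3^b < (3::nat)^n" by linarith
      then have "b < n" by simp
      moreover from a have "a < n" by simp
      ultimately show "p \<in> {..<n}\<times>{..<n}" using ab by simp
    qed
    then have "xs \<in> ?L" using xs m by simp
    moreover have "m = ?f xs" using xs(2) by (simp add: dbns_rep_def)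
    ultimately show "m \<in> ?f ` ?L" by blast
  qed
  have fin: "finite ?L" using finite_lists_length_le[of "{..<n}\<times>{..<n}" k] by simp
  have "card {m. m < 2^n \<and> kstar m \<le> k} \<le> card (?f ` ?L)"
    by (rule card_mono[OF finite_imageI[OF fin] sub])
  also have "\<dots> \<le> card ?L" by (rule card_image_le[OF fin])
  also have "\<dots> = (\<Sum>i\<le>k. (n*n)^i)" by (subst card_lists_length_le) auto
  also have "\<dots> \<le> (n*n+1)^k" by (rule geo_le)
  finally show ?thesis .
qed

lemma sum_bound: "(2^n - (n*n+1)^k) * (k+1) \<le> (\<Sum>m<2^n. kstar m)"
proof -
  let ?S = "{m. m < 2^n \<and> kstar m \<le> k}"
  have Ssub: "?S \<subseteq> {..<2^n}" by auto
  have "card ({..<2^n} - ?S) = 2^n - card ?S"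
    using Ssub by (subst card_Diff_subset) (auto intro: finite_subset)
  then have c: "2^n - (n*n+1)^k \<le> card ({..<2^n} - ?S)" using card_S[of n k] by simp
  have "card ({..<2^n} - ?S) * (k+1) = (\<Sum>m\<in>{..<2^n} - ?S. k+1)" by simp
  also have "\<dots> \<le> (\<Sum>m\<in>{..<2^n} - ?S. kstar m)"
    by (rule sum_mono) auto
  also have "\<dots> \<le> (\<Sum>m<2^n. kstar m)" by (rule sum_mono2) auto
  finally show ?thesis using c by (meson le_trans mult_le_mono1)
qed

lemma Astar_bound:
  assumes "real ((n*n+1)^k) \<le> 2^n / 2"
  shows "Astar n \<ge> (real k+1)/2"
proof -
  have sb: "real ((2^n - (n*n+1)^k) * (k+1)) \<le> (\<Sum>m<2^n. real (kstar m))"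
    using sum_bound[of n k] by (metis of_nat_le_iff of_nat_sum)
  have "(2::real)^n/2 \<le> 2^n" by simp
  then have "real ((n*n+1)^k) \<le> 2^n" using assms by linarith
  then have le: "(n*n+1)^k \<le> 2^n" using of_nat_le_iff[where 'a=real, of "(n*n+1)^k" "2^n"] by simp
  have d: "real (2^n - (n*n+1)^k) = 2^n - real ((n*n+1)^k)"
    using le by (simp add: of_nat_diff)
  have eq: "real ((2^n - (n*n+1)^k) * (k+1)) = real (2^n - (n*n+1)^k) * (real k+1)"
    by (simp only: of_nat_mult of_nat_add of_nat_1)
  have "real (2^n - (n*n+1)^k) * (real k+1) \<le> (\<Sum>m<2^n. real (kstar m))"
    using sb unfolding eq .
  then have "(2^n - real ((n*n+1)^k)) * (k+1) \<le> (\<Sum>m<2^n. real (kstar m))"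
    unfolding d by (simp add: add.commute)
  moreover have "2^n/2 * (k+1) \<le> (2^n - real ((n*n+1)^k)) * (k+1)"
    using assms by (intro mult_right_mono) auto
  ultimately have "2^n/2 * (k+1) \<le> (\<Sum>m<2^n. real (kstar m))" by linarith
  then show ?thesis unfolding Astar_def by (simp add: field_simps)
qed

theorem theorem1:
  shows "Astar \<in> \<Omega>(\<lambda>n. real n / log 2 (real n))"
proof (rule landau_omega.bigI[of "1/8"])
  show "eventually (\<lambda>n. norm (Astar n) \<ge> 1/8 * norm (real n / log 2 (real n))) at_top"
    using eventually_ge_at_top[of "16::nat"]
  proof eventually_elim
    case (elim n)
    define L where "L = log 2 (real n)"
    have "log 2 (real n) \<ge> log 2 16" using elim by (subst log_le_cancel_iff) auto
    moreover have "log 2 (16::real) = 4"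
    proof -
      have "(16::real) = 2 powr 4" by simp
      moreover have "log 2 (2 powr (4::real)) = 4" by (rule log_powr_cancel) auto
      ultimately show ?thesis by simp
    qed
    ultimately have L4: "L \<ge> 4" unfolding L_def by simp
    define k where "k = nat \<lfloor>n / (4*L)\<rfloor>"
    have k1: "real k \<le> n / (4*L)" unfolding k_def using L4
      by (simp add: of_nat_floor)
    have k2: "n / (4*L) < real k + 1" unfolding k_def using L4 by linarith
    have n3: "real (n*n+1) \<le> real n ^ 3" using elim
    proof -
      have a: "real n * real n * 2 \<le> real n * real n * real n" using elim by (intro mult_left_mono) auto
      have b: "1 * 1 \<le> real n * real n" by (rule mult_mono) (use elim in auto)
      have c: "real (n*n+1) = real n * real n + 1" by simp
      have d: "real n ^ 3 = real n * real n * real n" by (simp add: power3_eq_cube)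
      show ?thesis using a b c d by linarith
    qed
    have nL: "real n = 2 powr L" unfolding L_def using elim by simp
    have "real ((n*n+1)^k) \<le> (real n ^ 3)^k"
      using n3 by (simp only: of_nat_power) (rule power_mono, auto)
    also have "\<dots> = 2 powr (3*L*k)"
      by (simp add: nL powr_realpow[symmetric] powr_powr ac_simps)
    also have "\<dots> \<le> 2 powr (3 * n / 4)"
    proof -
      have "3*L*k \<le> 3*L*(n/(4*L))" using k1 L4 by (intro mult_left_mono) auto
      then show ?thesis using L4 by simp
    qed
    also have "\<dots> \<le> 2 powr (n - 1)" using elim by simp
    also have "\<dots> = 2^n/2" using elim by (cases n) (auto simp add: powr_diff powr_realpow)
    finally have "Astar n \<ge> (real k+1)/2" by (rule Astar_bound)
    moreover have "(real k+1)/2 \<ge> 1/8 * (n / L)" using k2 L4 by (simp add: field_simps)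
    moreover have "n / L \<ge> 0" using L4 by simp
    ultimately show ?case unfolding L_def by simp
  qed
qed simp

end
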